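(* Let $g\in\mathcal C_b(E)$ with $r(g)<0$. Then for every $x\in E$ the family $\{e^{\int_0^\tau g(X_s)ds}\}_{\tau\in\mathcal T_x}$ is uniformly integrable under $\mathbb P_x$.
   Context: $X$ is a standard Feller–Markov process with values in a locally compact separable metric space $E$ with Borel $\sigma$-field $\mathcal E$; laws $\mathbb P_x$, expectations $\mathbb E_x$, $P_t(x,A)=\mathbb P_x[X_t\in A]$, and for every $t>0$ and $x_n\to x$, $\sup_{A\in\mathcal E}|P_t(x_n,A)-P_t(x,A)|\to0$. $\mathcal C_b(E)$: bounded continuous real functions. $\mathcal T_x$: $\mathbb P_x$-a.s. finite stopping times. $r(g):=\lim_{t\to\infty}\frac1t\ln\sup_{x\in E}\mathbb E_x[e^{\int_0^tg(X_s)ds}]$. *)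

theory Defs
  imports "HOL-Analysis.Analysis" "HOL-Probability.Probability"
begin

text \<open>Setting: the underlying measurable space is M (sample space), F is the filtration
 indexed by real times t, P x is the law of the process started at x (all P x live on the
 sigma-algebra of M), X t is the state at time t (only t \<ge> 0 is relevant).
 The state space E is the whole type 'e.\<close>

definition is_stopping_time :: "'w measure \<Rightarrow> (real \<Rightarrow> 'w measure) \<Rightarrow> ('w \<Rightarrow> ereal) \<Rightarrow> bool" where
  "is_stopping_time M F \<tau> \<longleftrightarrow>
     (\<forall>\<omega>\<in>space M. 0 \<le> \<tau> \<omega>) \<and>
     (\<forall>t::real. 0 \<le> t \<longrightarrow> {\<omega>\<in>space M. \<tau> \<omega> \<le> ereal t} \<in> sets (F t))"

definition filtration_infty :: "'w measure \<Rightarrow> (real \<Rightarrow> 'w measure) \<Rightarrow> 'w measure" where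
  "filtration_infty M F = sigma (space M) (\<Union>t\<in>{0..}. sets (F t))"

definition stopped_sigma :: "'w measure \<Rightarrow> (real \<Rightarrow> 'w measure) \<Rightarrow> ('w \<Rightarrow> ereal) \<Rightarrow> 'w measure" where
  "stopped_sigma M F \<tau> = sigma (space M)
     {A \<in> sets (filtration_infty M F). \<forall>t::real. 0 \<le> t \<longrightarrow> A \<inter> {\<omega>\<in>space M. \<tau> \<omega> \<le> ereal t} \<in> sets (F t)}"

definition trans_prob :: "('e \<Rightarrow> 'w measure) \<Rightarrow> (real \<Rightarrow> 'w \<Rightarrow> 'e) \<Rightarrow> real \<Rightarrow> 'e \<Rightarrow> 'e set \<Rightarrow> real" where
  "trans_prob P X t x A = measure (P x) {\<omega>\<in>space (P x). X t \<omega> \<in> A}"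

definition vanishing_at_infinity :: "('e::topological_space \<Rightarrow> real) \<Rightarrow> bool" where
  "vanishing_at_infinity f \<longleftrightarrow> continuous_on UNIV f \<and>
     (\<forall>\<epsilon>>0. \<exists>K. compact K \<and> (\<forall>y. y \<notin> K \<longrightarrow> \<bar>f y\<bar> < \<epsilon>))"

text \<open>Standard Feller--Markov process (conservative, with state space the whole type 'e).\<close>
definition standard_feller_markov ::
  "'w measure \<Rightarrow> (real \<Rightarrow> 'w measure) \<Rightarrow> ('e::{metric_space,second_countable_topology} \<Rightarrow> 'w measure)
     \<Rightarrow> (real \<Rightarrow> 'w \<Rightarrow> 'e) \<Rightarrow> bool" where
  "standard_feller_markov M F P X \<longleftrightarrow>
     \<comment> \<open>E is a locally compact (separable metric) space\<close>
     locally_compact_space (euclidean :: 'e topology) \<and>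
     \<comment> \<open>laws\<close>
     (\<forall>x. prob_space (P x) \<and> sets (P x) = sets M) \<and>
     \<comment> \<open>filtration\<close>
     (\<forall>t. space (F t) = space M \<and> sets (F t) \<subseteq> sets M) \<and>
     (\<forall>s t. 0 \<le> s \<longrightarrow> s \<le> t \<longrightarrow> sets (F s) \<subseteq> sets (F t)) \<and>
     \<comment> \<open>adaptedness\<close>
     (\<forall>t\<ge>0. X t \<in> measurable (F t) borel) \<and>
     \<comment> \<open>right-continuous paths with left limits\<close>
     (\<forall>\<omega>\<in>space M. \<forall>t\<ge>0. ((\<lambda>s. X s \<omega>) \<longlongrightarrow> X t \<omega>) (at_right t)) \<and>
     (\<forall>\<omega>\<in>space M. \<forall>t>0. \<exists>l. ((\<lambda>s. X s \<omega>) \<longlongrightarrow> l) (at_left t)) \<and>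
     \<comment> \<open>starting point\<close>
     (\<forall>x. AE \<omega> in P x. X 0 \<omega> = x) \<and>
     \<comment> \<open>measurability of the transition function\<close>
     (\<forall>t\<ge>0. \<forall>A\<in>sets borel. (\<lambda>x. trans_prob P X t x A) \<in> borel_measurable borel) \<and>
     \<comment> \<open>strong Markov property\<close>
     (\<forall>x \<tau> s (f::'e \<Rightarrow> real). is_stopping_time M F \<tau> \<longrightarrow> 0 \<le> s \<longrightarrow>
        f \<in> borel_measurable borel \<longrightarrow> bounded (range f) \<longrightarrow>
        (AE \<omega> in P x. \<tau> \<omega> < \<infinity> \<longrightarrow>
           real_cond_exp (P x) (stopped_sigma M F \<tau>)
             (\<lambda>\<omega>. indicator {\<omega>. \<tau> \<omega> < \<infinity>} \<omega> * f (X (real_of_ereal (\<tau> \<omega>) + s) \<omega>)) \<omega>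
           = (\<integral>\<omega>'. f (X s \<omega>') \<partial>P (X (real_of_ereal (\<tau> \<omega>)) \<omega>)))) \<and>
     \<comment> \<open>quasi-left continuity\<close>
     (\<forall>x (\<sigma>::nat \<Rightarrow> 'w \<Rightarrow> ereal) \<tau>. (\<forall>n. is_stopping_time M F (\<sigma> n)) \<longrightarrow>
        (\<forall>\<omega>\<in>space M. incseq (\<lambda>n. \<sigma> n \<omega>) \<and> \<tau> \<omega> = (SUP n. \<sigma> n \<omega>)) \<longrightarrow>
        (AE \<omega> in P x. \<tau> \<omega> < \<infinity> \<longrightarrow>
           (\<lambda>n. X (real_of_ereal (\<sigma> n \<omega>)) \<omega>) \<longlonglongrightarrow> X (real_of_ereal (\<tau> \<omega>)) \<omega>)) \<and>
     \<comment> \<open>Feller property: P_t maps C_0 into C_0\<close>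
     (\<forall>t\<ge>0. \<forall>f. vanishing_at_infinity f \<longrightarrow>
        vanishing_at_infinity (\<lambda>x. \<integral>\<omega>. f (X t \<omega>) \<partial>P x)) \<and>
     \<comment> \<open>strong continuity of x \<mapsto> P_t(x,.) in total variation\<close>
     (\<forall>t>0. \<forall>x (xs::nat \<Rightarrow> 'e). xs \<longlonglongrightarrow> x \<longrightarrow>
        (\<lambda>n. SUP A\<in>sets borel. \<bar>trans_prob P X t (xs n) A - trans_prob P X t x A\<bar>) \<longlonglongrightarrow> 0)"

definition Cb :: "('e::topological_space \<Rightarrow> real) set" where
  "Cb = {g. continuous_on UNIV g \<and> bounded (range g)}"

definition exp_functional :: "(real \<Rightarrow> 'w \<Rightarrow> 'e) \<Rightarrow> ('e \<Rightarrow> real) \<Rightarrow> real \<Rightarrow> 'w \<Rightarrow> real" where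
  "exp_functional X g T \<omega> = exp (LBINT s:{0..T}. g (X s \<omega>))"

text \<open>r(g) = lim_{t\<rightarrow>\<infinity>} (1/t) ln sup_x E_x[exp(\<integral>_0^t g(X_s) ds)], taken as a limsup
  (which coincides with the limit whenever it exists).\<close>
definition exp_rate :: "('e \<Rightarrow> 'w measure) \<Rightarrow> (real \<Rightarrow> 'w \<Rightarrow> 'e) \<Rightarrow> ('e \<Rightarrow> real) \<Rightarrow> ereal" where
  "exp_rate P X g = Limsup at_top
     (\<lambda>t::real. ereal (ln (SUP x. \<integral>\<omega>. exp_functional X g t \<omega> \<partial>P x) / t))"

definition uniformly_integrable :: "'w measure \<Rightarrow> 'i set \<Rightarrow> ('i \<Rightarrow> 'w \<Rightarrow> real) \<Rightarrow> bool" where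
  "uniformly_integrable M I f \<longleftrightarrow>
     (\<forall>i\<in>I. f i \<in> borel_measurable M) \<and>
     ((\<lambda>K::real. SUP i\<in>I. \<integral>\<^sup>+\<omega>. indicator {\<omega>. K < \<bar>f i \<omega>\<bar>} \<omega> * ennreal \<bar>f i \<omega>\<bar> \<partial>M)
        \<longlongrightarrow> 0) at_top"

end

theory Submission
  imports Defs
begin

lemma XM:
  assumes sfm: "standard_feller_markov M F P X" and t: "0 \<le> t"
  shows "X t \<in> measurable M borel"
proof -
  from sfm t have 1: "X t \<in> measurable (F t) borel" and 2: "space (F t) = space M"
    and 3: "sets (F t) \<subseteq> sets M"
    unfolding standard_feller_markov_def by auto
  show ?thesis using 1 2 3 unfolding measurable_def by auto
qed

lemma Y_meas:
  fixes M :: "'w measure" and X :: "real \<Rightarrow> 'w \<Rightarrow> 'e::{metric_space,second_countable_topology}"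
  assumes sfm: "standard_feller_markov M F P X" and gc: "continuous_on UNIV g"
  shows "(\<lambda>z. if 0 \<le> snd z then g (X (snd z) (fst z)) else (0::real)) \<in> borel_measurable (M \<Otimes>\<^sub>M lborel)"
proof (rule borel_measurable_LIMSEQ_real)
  have gm[measurable]: "g \<in> borel_measurable borel" using gc by (rule borel_measurable_continuous_onI)
  define c where "c n k = (real_of_int k + 1) / 2^n" for n :: nat and k :: int
  define u where "u n z = (if 0 \<le> snd z then g (X (c n \<lfloor>2^n * snd z\<rfloor>) (fst z)) else 0)" for n and z :: "'w \<times> real"
  show "u n \<in> borel_measurable (M \<Otimes>\<^sub>M lborel)" for n
  proof -
    define f where "f k z = (if 0 \<le> snd z then (if 0 \<le> c n k then g (X (c n k) (fst z)) else 0) else 0)" for k :: int and z :: "'w \<times> real"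
    have "(\<lambda>z. f (\<lfloor>2^n * snd z\<rfloor>) z) \<in> borel_measurable (M \<Otimes>\<^sub>M lborel)"
    proof (rule measurable_compose_countable)
      fix k :: int
      show "f k \<in> borel_measurable (M \<Otimes>\<^sub>M lborel)"
      proof (cases "0 \<le> c n k")
        case True
        have [measurable]: "X (c n k) \<in> measurable M borel" by (rule XM[OF sfm True])
        show ?thesis unfolding f_def using True by measurable
      next
        case False
        have "f k = (\<lambda>z. 0)" using False by (auto simp: f_def fun_eq_iff)
        then show ?thesis by simp
      qed
    next
      have "(\<lambda>z. (2::real)^n * snd z) \<in> borel_measurable (M \<Otimes>\<^sub>M lborel)" by measurable
      from measurable_compose[OF this measurable_real_floor]
      show "(\<lambda>z. \<lfloor>(2::real)^n * snd z\<rfloor>) \<in> measurable (M \<Otimes>\<^sub>M lborel) (count_space UNIV)"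
        by simp
    qed
    moreover have "(\<lambda>z. f (\<lfloor>2^n * snd z\<rfloor>) z) = u n"
    proof
      fix z :: "'w \<times> real"
      show "f (\<lfloor>2^n * snd z\<rfloor>) z = u n z"
      proof (cases "0 \<le> snd z")
        case True
        then have "0 \<le> \<lfloor>2^n * snd z\<rfloor>" by simp
        then have "0 \<le> c n \<lfloor>2^n * snd z\<rfloor>" unfolding c_def by simp
        then show ?thesis using True unfolding f_def u_def by simp
      qed (simp add: f_def u_def)
    qed
    ultimately show ?thesis by simp
  qed
  fix z :: "'w \<times> real" assume z: "z \<in> space (M \<Otimes>\<^sub>M lborel)"
  obtain \<omega> s where zz: "z = (\<omega>, s)" by (cases z)
  with z have om: "\<omega> \<in> space M" by (simp add: space_pair_measure)
  show "(\<lambda>n. u n z) \<longlonglongrightarrow> (if 0 \<le> snd z then g (X (snd z) (fst z)) else 0)"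
  proof (cases "0 \<le> s")
    case False then show ?thesis unfolding u_def zz by simp
  next
    case True
    have rc: "((\<lambda>r. X r \<omega>) \<longlongrightarrow> X s \<omega>) (at_right s)"
      using sfm om True unfolding standard_feller_markov_def by blast
    have gt: "s < c n \<lfloor>2^n * s\<rfloor>" for n
    proof -
      have "2^n * s < real_of_int \<lfloor>2^n * s\<rfloor> + 1" by linarith
      then show ?thesis unfolding c_def by (simp add: field_simps)
    qed
    have le: "c n \<lfloor>2^n * s\<rfloor> \<le> s + 1 / 2^n" for n
    proof -
      have "real_of_int \<lfloor>2^n * s\<rfloor> + 1 \<le> 2^n * s + 1" by linarith
      then show ?thesis unfolding c_def by (simp add: field_simps)
    qed
    have lim1: "(\<lambda>n. s + 1 / 2^n) \<longlonglongrightarrow> s + 0"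
      by (rule tendsto_add[OF tendsto_const LIMSEQ_divide_realpow_zero]) simp
    have ev1: "\<forall>\<^sub>F n in sequentially. s \<le> c n \<lfloor>2^n * s\<rfloor>"
      by (rule always_eventually) (meson gt less_imp_le)
    have ev2: "\<forall>\<^sub>F n in sequentially. c n \<lfloor>2^n * s\<rfloor> \<le> s + 1 / 2^n"
      by (rule always_eventually) (meson le)
    have "(\<lambda>n. c n \<lfloor>2^n * s\<rfloor>) \<longlonglongrightarrow> s"
      using tendsto_sandwich[OF ev1 ev2 tendsto_const] lim1 by simp
    then have "filterlim (\<lambda>n. c n \<lfloor>2^n * s\<rfloor>) (at_right s) sequentially"
      using gt by (intro tendsto_imp_filterlim_at_right) auto
    from filterlim_compose[OF rc this]
    have "(\<lambda>n. X (c n \<lfloor>2^n * s\<rfloor>) \<omega>) \<longlonglongrightarrow> X s \<omega>" .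
    then have "(\<lambda>n. g (X (c n \<lfloor>2^n * s\<rfloor>) \<omega>)) \<longlonglongrightarrow> g (X s \<omega>)"
      by (rule continuous_on_tendsto_compose[OF gc]) auto
    then show ?thesis unfolding u_def zz using True by simp
  qed
qed


lemma tau_meas:
  assumes sfm: "standard_feller_markov M F P X" and st: "is_stopping_time M F \<tau>"
  shows "\<tau> \<in> borel_measurable M"
proof (rule borel_measurableI_le)
  fix y :: ereal
  have pos: "\<forall>\<omega>\<in>space M. 0 \<le> \<tau> \<omega>" and stt: "\<And>t. 0 \<le> t \<Longrightarrow> {\<omega>\<in>space M. \<tau> \<omega> \<le> ereal t} \<in> sets (F t)"
    using st unfolding is_stopping_time_def by auto
  have sub: "\<And>t. sets (F t) \<subseteq> sets M" using sfm unfolding standard_feller_markov_def by auto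
  show "{\<omega>\<in>space M. \<tau> \<omega> \<le> y} \<in> sets M"
  proof (cases y)
    case (real t)
    show ?thesis
    proof (cases "0 \<le> t")
      case True then show ?thesis using stt sub real by blast
    next
      case False
      have nt: "\<not> (0 \<le> ereal t)" using False by simp
      have "\<omega> \<notin> {\<omega>\<in>space M. \<tau> \<omega> \<le> y}" for \<omega>
      proof
        assume "\<omega> \<in> {\<omega>\<in>space M. \<tau> \<omega> \<le> y}"
        then have "\<omega> \<in> space M" "\<tau> \<omega> \<le> ereal t" using real by auto
        then have "0 \<le> ereal t" using pos order_trans by blast
        then show False using nt by simp
      qed
      then have "{\<omega>\<in>space M. \<tau> \<omega> \<le> y} = {}" by blast
      then show ?thesis by (metis sets.empty_sets)
    qed
  next
    case PInf then show ?thesis by simp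
  next
    case MInf
    then have "{\<omega>\<in>space M. \<tau> \<omega> \<le> y} = {}" using pos by auto
    then show ?thesis by (metis sets.empty_sets)
  qed
qed

definition Ifun :: "(real \<Rightarrow> 'w \<Rightarrow> 'e) \<Rightarrow> ('e \<Rightarrow> real) \<Rightarrow> real \<Rightarrow> 'w \<Rightarrow> real" where
  "Ifun X g t \<omega> = (\<integral>s. indicator {0..t} s * g (X s \<omega>) \<partial>lborel)"

lemma expf_eq: "exp_functional X g t \<omega> = exp (Ifun X g t \<omega>)"
  unfolding exp_functional_def Ifun_def set_lebesgue_integral_def by simp

lemma Z_meas:
  fixes M :: "'w measure" and X :: "real \<Rightarrow> 'w \<Rightarrow> 'e::{metric_space,second_countable_topology}"
    and g :: "'e \<Rightarrow> real"
  assumes sfm: "standard_feller_markov M F P X" and gc: "continuous_on UNIV g"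
    and T[measurable]: "T \<in> borel_measurable M"
  shows "(\<lambda>\<omega>. exp_functional X g (T \<omega>) \<omega>) \<in> borel_measurable M"
proof -
  define Y where "Y z = (if 0 \<le> snd z then g (X (snd z) (fst z)) else (0::real))" for z :: "'w \<times> real"
  have Ym[measurable]: "Y \<in> borel_measurable (M \<Otimes>\<^sub>M lborel)"
    unfolding Y_def by (rule Y_meas[OF sfm gc])
  have eq: "exp_functional X g (T \<omega>) \<omega> = exp (\<integral>s. indicator {0..T \<omega>} s * Y (\<omega>, s) \<partial>lborel)" for \<omega>
    unfolding expf_eq Ifun_def
    by (intro arg_cong[where f=exp] Bochner_Integration.integral_cong) (auto simp: Y_def indicator_def)
  have "(\<lambda>\<omega>. \<integral>s. indicator {0..T \<omega>} s * Y (\<omega>, s) \<partial>lborel) \<in> borel_measurable M"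
  proof (rule lborel.borel_measurable_lebesgue_integral)
    have "(\<lambda>z. indicator {0..T (fst z)} (snd z) * Y z) \<in> borel_measurable (M \<Otimes>\<^sub>M lborel)"
    proof -
      have "(\<lambda>z. indicator {0..T (fst z)} (snd z) * Y z) = (\<lambda>z::'w\<times>real. (if 0 \<le> snd z \<and> snd z \<le> T (fst z) then 1 else (0::real)) * Y z)"
        by (auto simp: indicator_def fun_eq_iff)
      moreover have "(\<lambda>z::'w\<times>real. (if 0 \<le> snd z \<and> snd z \<le> T (fst z) then 1 else (0::real)) * Y z) \<in> borel_measurable (M \<Otimes>\<^sub>M lborel)"
        by measurable
      ultimately show ?thesis by simp
    qed
    then show "(\<lambda>(\<omega>, s). indicator {0..T \<omega>} s * Y (\<omega>, s)) \<in> borel_measurable (M \<Otimes>\<^sub>M lborel)"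
      by (simp add: case_prod_beta')
  qed
  then show ?thesis unfolding eq by measurable
qed

lemma path_int:
  fixes M :: "'w measure" and X :: "real \<Rightarrow> 'w \<Rightarrow> 'e::{metric_space,second_countable_topology}"
    and g :: "'e \<Rightarrow> real"
  assumes sfm: "standard_feller_markov M F P X" and gc: "continuous_on UNIV g"
    and G: "\<And>y. \<bar>g y\<bar> \<le> G" and om: "\<omega> \<in> space M"
  shows "integrable lborel (\<lambda>s. indicator {0..t} s * g (X s \<omega>))"
proof -
  define Y where "Y z = (if 0 \<le> snd z then g (X (snd z) (fst z)) else (0::real))" for z :: "'w \<times> real"
  have Ym: "Y \<in> borel_measurable (M \<Otimes>\<^sub>M lborel)"
    unfolding Y_def by (rule Y_meas[OF sfm gc])
  have [measurable]: "(\<lambda>s. Y (\<omega>, s)) \<in> borel_measurable lborel"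
    by (rule measurable_Pair2[OF Ym om])
  have Yb: "\<bar>Y z\<bar> \<le> \<bar>G\<bar>" for z
    using G[of "X (snd z) (fst z)"] G[of undefined] by (auto simp: Y_def)
  have eq: "(\<lambda>s. indicator {0..t} s * g (X s \<omega>)) = (\<lambda>s. indicator {0..t} s * Y (\<omega>, s))"
    by (auto simp: Y_def indicator_def fun_eq_iff)
  have "integrable lborel (\<lambda>s. indicator {0..t} s * G)"
    by (intro integrable_mult_left integrable_real_indicator) (auto simp: emeasure_lborel_Icc_eq)
  then show ?thesis unfolding eq
    by (rule Bochner_Integration.integrable_bound) (auto simp: indicator_def abs_mult intro!: AE_I2 Yb)
qed


lemma int_indG: "0 \<le> (t::real) \<Longrightarrow> (\<integral>s. indicator {0..t} s * (G::real) \<partial>lborel) = G * t"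
  by simp

lemma int_indG': "integrable lborel (\<lambda>s. indicator {0..(t::real)} s * (G::real))"
proof -
  have "{0..t} \<in> sets lborel" by (simp add: atLeastAtMost_borel)
  moreover have "emeasure lborel {0..t} < \<infinity>" by (simp add: emeasure_lborel_Icc_eq)
  ultimately have "integrable lborel (indicator {0..t} :: real \<Rightarrow> real)"
    by (rule integrable_real_indicator)
  then show ?thesis by (rule integrable_mult_left)
qed

lemma Ibound:
  fixes M :: "'w measure" and X :: "real \<Rightarrow> 'w \<Rightarrow> 'e::{metric_space,second_countable_topology}"
    and g :: "'e \<Rightarrow> real"
  assumes sfm: "standard_feller_markov M F P X" and gc: "continuous_on UNIV g"
    and G: "\<And>y. \<bar>g y\<bar> \<le> G" and om: "\<omega> \<in> space M" and t: "0 \<le> t"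
  shows "\<bar>Ifun X g t \<omega>\<bar> \<le> G * t"
proof -
  have i1: "integrable lborel (\<lambda>s. indicator {0..t} s * g (X s \<omega>))"
    by (rule path_int[OF sfm gc G om])
  have "Ifun X g t \<omega> \<le> (\<integral>s. indicator {0..t} s * G \<partial>lborel)"
    unfolding Ifun_def
  proof (rule integral_mono[OF i1 int_indG'])
    fix s :: real
    show "indicator {0..t} s * g (X s \<omega>) \<le> indicator {0..t} s * G"
      using abs_le_D1[OF G[of "X s \<omega>"]] by (cases "s \<in> {0..t}") simp_all
  qed
  moreover have "- Ifun X g t \<omega> \<le> (\<integral>s. indicator {0..t} s * G \<partial>lborel)"
    unfolding Ifun_def integral_minus[symmetric]
  proof (rule integral_mono[OF integrable_minus[OF i1] int_indG'])
    fix s :: real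
    show "- (indicator {0..t} s * g (X s \<omega>)) \<le> indicator {0..t} s * G"
      using abs_le_D2[OF G[of "X s \<omega>"]] by (cases "s \<in> {0..t}") simp_all
  qed
  ultimately show ?thesis using int_indG[OF t, of G] by linarith
qed

lemma Ifloor:
  fixes M :: "'w measure" and X :: "real \<Rightarrow> 'w \<Rightarrow> 'e::{metric_space,second_countable_topology}"
    and g :: "'e \<Rightarrow> real"
  assumes sfm: "standard_feller_markov M F P X" and gc: "continuous_on UNIV g"
    and G: "\<And>y. \<bar>g y\<bar> \<le> G" and om: "\<omega> \<in> space M" and t: "0 \<le> t"
  shows "Ifun X g t \<omega> \<le> Ifun X g (real (nat \<lfloor>t\<rfloor>)) \<omega> + G"
proof -
  define n where "n = real (nat \<lfloor>t\<rfloor>)"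
  have n0: "0 \<le> n" and nt: "n \<le> t" and tn: "t - n \<le> 1" using t unfolding n_def by linarith+
  have G0: "0 \<le> G" using G[of undefined] by linarith
  have i1: "integrable lborel (\<lambda>s. indicator {0..t} s * g (X s \<omega>))"
    by (rule path_int[OF sfm gc G om])
  have i2: "integrable lborel (\<lambda>s. indicator {0..n} s * g (X s \<omega>))"
    by (rule path_int[OF sfm gc G om])
  have "Ifun X g t \<omega> \<le> (\<integral>s. indicator {0..n} s * g (X s \<omega>) + (indicator {0..t} s * G - indicator {0..n} s * G) \<partial>lborel)"
    unfolding Ifun_def
  proof (rule integral_mono[OF i1])
    show "integrable lborel (\<lambda>s. indicator {0..n} s * g (X s \<omega>) + (indicator {0..t} s * G - indicator {0..n} s * G))"
      by (intro Bochner_Integration.integrable_add Bochner_Integration.integrable_diff i2 int_indG')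
    fix s :: real
    show "indicator {0..t} s * g (X s \<omega>) \<le> indicator {0..n} s * g (X s \<omega>) + (indicator {0..t} s * G - indicator {0..n} s * G)"
    proof (cases "s \<in> {0..n}")
      case True
      then have "s \<in> {0..t}" using nt by auto
      with True show ?thesis by simp
    next
      case False
      show ?thesis
      proof (cases "s \<in> {0..t}")
        case True
        with False show ?thesis using abs_le_D1[OF G[of "X s \<omega>"]] by simp
      qed (use False in simp)
    qed
  qed
  also have "\<dots> = Ifun X g n \<omega> + (G * t - G * n)"
  proof -
    have e1: "(\<integral>s. indicator {0..n} s * g (X s \<omega>) + (indicator {0..t} s * G - indicator {0..n} s * G) \<partial>lborel)
       = (\<integral>s. indicator {0..n} s * g (X s \<omega>) \<partial>lborel) + (\<integral>s. indicator {0..t} s * G - indicator {0..n} s * G \<partial>lborel)"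
      by (rule Bochner_Integration.integral_add[OF i2 Bochner_Integration.integrable_diff[OF int_indG' int_indG']])
    have e2: "(\<integral>s. indicator {0..t} s * G - indicator {0..n} s * G \<partial>lborel)
       = (\<integral>s. indicator {0..t} s * G \<partial>lborel) - (\<integral>s. indicator {0..n} s * G \<partial>lborel)"
      by (rule Bochner_Integration.integral_diff[OF int_indG' int_indG'])
    show ?thesis unfolding e1 e2 int_indG[OF t] int_indG[OF n0] Ifun_def ..
  qed
  also have "\<dots> \<le> Ifun X g n \<omega> + G"
    using mult_left_le[OF tn G0] right_diff_distrib[of G t n] by linarith
  finally show ?thesis unfolding n_def .
qed


lemma EZ_facts:
  fixes M :: "'w measure" and X :: "real \<Rightarrow> 'w \<Rightarrow> 'e::{metric_space,second_countable_topology}"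
    and g :: "'e \<Rightarrow> real"
  assumes sfm: "standard_feller_markov M F P X" and gc: "continuous_on UNIV g"
    and G: "\<And>y. \<bar>g y\<bar> \<le> G" and t: "0 \<le> t"
  shows "(\<lambda>\<omega>. exp_functional X g t \<omega>) \<in> borel_measurable (P y)"
    and "\<And>\<omega>. \<omega> \<in> space (P y) \<Longrightarrow> exp (- (G * t)) \<le> exp_functional X g t \<omega> \<and> exp_functional X g t \<omega> \<le> exp (G * t)"
    and "integrable (P y) (\<lambda>\<omega>. exp_functional X g t \<omega>)"
    and "exp (- (G * t)) \<le> (\<integral>\<omega>. exp_functional X g t \<omega> \<partial>P y)"
    and "(\<integral>\<omega>. exp_functional X g t \<omega> \<partial>P y) \<le> exp (G * t)"
proof -
  have ps: "prob_space (P y)" and se: "sets (P y) = sets M"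
    using sfm unfolding standard_feller_markov_def by auto
  have sp: "space (P y) = space M" using se by (rule sets_eq_imp_space_eq)
  have "(\<lambda>\<omega>. exp_functional X g ((\<lambda>_. t) \<omega>) \<omega>) \<in> borel_measurable M"
    by (rule Z_meas[OF sfm gc]) simp
  then show m: "(\<lambda>\<omega>. exp_functional X g t \<omega>) \<in> borel_measurable (P y)"
    by (simp add: measurable_cong_sets[OF se refl])
  show b: "exp (- (G * t)) \<le> exp_functional X g t \<omega> \<and> exp_functional X g t \<omega> \<le> exp (G * t)"
    if "\<omega> \<in> space (P y)" for \<omega>
  proof -
    have "\<bar>Ifun X g t \<omega>\<bar> \<le> G * t" using Ibound[OF sfm gc G _ t] that sp by simp
    then show ?thesis unfolding expf_eq by (simp add: abs_le_iff)
  qed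
  show i: "integrable (P y) (\<lambda>\<omega>. exp_functional X g t \<omega>)"
  proof (rule finite_measure.integrable_const_bound[where B="exp (G * t)"])
    show "finite_measure (P y)" using ps by (simp add: prob_space_def)
    show "AE \<omega> in P y. norm (exp_functional X g t \<omega>) \<le> exp (G * t)"
      using b by (intro AE_I2) (simp add: expf_eq)
  qed (rule m)
  show "exp (- (G * t)) \<le> (\<integral>\<omega>. exp_functional X g t \<omega> \<partial>P y)"
    by (rule prob_space.integral_ge_const[OF ps i]) (use b in \<open>intro AE_I2, blast\<close>)
  show "(\<integral>\<omega>. exp_functional X g t \<omega> \<partial>P y) \<le> exp (G * t)"
    by (rule prob_space.integral_le_const[OF ps i]) (use b in \<open>intro AE_I2, blast\<close>)
qed


theorem propositionA2:
  fixes M :: "'w measure" and F :: "real \<Rightarrow> 'w measure"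
    and P :: "'e::{metric_space,second_countable_topology} \<Rightarrow> 'w measure"
    and X :: "real \<Rightarrow> 'w \<Rightarrow> 'e" and g :: "'e \<Rightarrow> real" and x :: 'e
  assumes "standard_feller_markov M F P X"
    and "g \<in> Cb"
    and "exp_rate P X g < 0"
  shows "uniformly_integrable (P x)
           {\<tau>. is_stopping_time M F \<tau> \<and> (AE \<omega> in P x. \<tau> \<omega> < \<infinity>)}
           (\<lambda>\<tau> \<omega>. exp_functional X g (real_of_ereal (\<tau> \<omega>)) \<omega>)"
proof -
  note sfm = assms(1)
  have gc: "continuous_on UNIV g" and bd: "bounded (range g)" using assms(2) unfolding Cb_def by auto
  obtain G where G: "\<And>y. \<bar>g y\<bar> \<le> G"
    using bd unfolding bounded_iff by auto
  have G0: "0 \<le> G" using G[of x] by linarith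
  have ps: "prob_space (P x)" and se: "sets (P x) = sets M"
    using sfm unfolding standard_feller_markov_def by auto
  have sp: "space (P x) = space M" using se by (rule sets_eq_imp_space_eq)
  define Z where "Z t \<omega> = exp_functional X g t \<omega>" for t \<omega>
  define S where "S t = (SUP y. \<integral>\<omega>. exp_functional X g t \<omega> \<partial>P y)" for t
  obtain C :: ereal where C1: "exp_rate P X g < C" and C2: "C < 0"
    using assms(3) dense by blast
  obtain c where cC: "C = ereal c" using C1 C2 by (cases C) auto
  have c0: "c < 0" using C2 cC by simp
  have ev: "\<forall>\<^sub>F t in at_top. ereal (ln (S t) / t) < C"
    using Limsup_lessD[OF C1[unfolded exp_rate_def]] unfolding S_def .
  then obtain N where N: "\<And>t. t \<ge> N \<Longrightarrow> ereal (ln (S t) / t) < C"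
    by (auto simp: eventually_at_top_linorder)
  have decay: "(\<integral>\<omega>. Z t \<omega> \<partial>P x) < exp (c * t)" if t: "t \<ge> max N 1" for t
  proof -
    have t0: "0 \<le> t" and t1: "0 < t" using t by auto
    have bdd: "bdd_above (range (\<lambda>y. \<integral>\<omega>. exp_functional X g t \<omega> \<partial>P y))"
      using EZ_facts(5)[OF sfm gc G t0] by (intro bdd_aboveI2) 
    have le: "(\<integral>\<omega>. Z t \<omega> \<partial>P x) \<le> S t"
      unfolding S_def Z_def by (rule cSUP_upper[OF UNIV_I bdd])
    have pos: "0 < (\<integral>\<omega>. Z t \<omega> \<partial>P x)"
      using EZ_facts(4)[OF sfm gc G t0, of x] unfolding Z_def by (meson exp_gt_zero less_le_trans)
    have "ln (S t) / t < c" using N[of t] t cC by simp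
    then have "ln (S t) < c * t" using t1 by (simp add: divide_less_eq)
    then have "exp (ln (S t)) < exp (c * t)" by simp
    moreover have "exp (ln (S t)) = S t" using pos le by simp
    ultimately show ?thesis using le by simp
  qed
  define N' where "N' = nat \<lceil>max N 1\<rceil>"
  define q where "q = exp c"
  define K where "K = exp ((G - c) * real N')"
  have q0: "0 < q" and q1: "q < 1" using c0 unfolding q_def by auto
  have EZn: "(\<integral>\<omega>. Z (real n) \<omega> \<partial>P x) \<le> K * q ^ n" for n
  proof (cases "N' \<le> n")
    case True
    then have "real n \<ge> max N 1" unfolding N'_def by linarith
    then have "(\<integral>\<omega>. Z (real n) \<omega> \<partial>P x) \<le> exp (c * real n)" using decay by (simp add: less_imp_le)
    also have "\<dots> = q ^ n" unfolding q_def by (simp add: exp_of_nat_mult[symmetric] mult.commute)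
    also have "\<dots> \<le> K * q ^ n"
    proof -
      have "1 \<le> K" unfolding K_def using G0 c0 by simp
      then show ?thesis using q0 by (simp add: mult_le_cancel_right1)
    qed
    finally show ?thesis .
  next
    case False
    have "(\<integral>\<omega>. Z (real n) \<omega> \<partial>P x) \<le> exp (G * real n)"
      using EZ_facts(5)[OF sfm gc G, of "real n" x] unfolding Z_def by simp
    also have "\<dots> = exp ((G - c) * real n) * exp (c * real n)"
      by (simp add: exp_add[symmetric] algebra_simps)
    also have "\<dots> \<le> K * exp (c * real n)"
      unfolding K_def using False G0 c0 by (intro mult_right_mono) (auto intro!: mult_left_mono)
    also have "exp (c * real n) = q ^ n" unfolding q_def by (simp add: exp_of_nat_mult[symmetric] mult.commute)
    finally show ?thesis .
  qed
  have K0: "0 \<le> K" unfolding K_def by simp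
  define h where "h \<omega> = (\<Sum>n. ennreal (exp G * Z (real n) \<omega>))" for \<omega>
  have Zm: "\<And>n. (\<lambda>\<omega>. Z (real n) \<omega>) \<in> borel_measurable (P x)"
    unfolding Z_def by (rule EZ_facts(1)[OF sfm gc G]) simp
  have hm[measurable]: "h \<in> borel_measurable (P x)"
    unfolding h_def using Zm by measurable
  have hint: "(\<integral>\<^sup>+\<omega>. h \<omega> \<partial>P x) < \<infinity>"
  proof -
    have "(\<integral>\<^sup>+\<omega>. h \<omega> \<partial>P x) = (\<Sum>n. \<integral>\<^sup>+\<omega>. ennreal (exp G * Z (real n) \<omega>) \<partial>P x)"
      unfolding h_def by (rule nn_integral_suminf) (use Zm in measurable)
    also have "\<dots> \<le> (\<Sum>n. ennreal (exp G * K * q ^ n))"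
    proof (rule suminf_le)
      fix n
      have int: "integrable (P x) (\<lambda>\<omega>. Z (real n) \<omega>)"
        unfolding Z_def by (rule EZ_facts(3)[OF sfm gc G]) simp
      have nn: "AE \<omega> in P x. 0 \<le> exp G * Z (real n) \<omega>"
        by (intro AE_I2) (simp add: Z_def exp_functional_def)
      have "(\<integral>\<^sup>+\<omega>. ennreal (exp G * Z (real n) \<omega>) \<partial>P x) = ennreal (\<integral>\<omega>. exp G * Z (real n) \<omega> \<partial>P x)"
        by (rule nn_integral_eq_integral[OF integrable_mult_right[OF int] nn])
      also have "\<dots> = ennreal (exp G * (\<integral>\<omega>. Z (real n) \<omega> \<partial>P x))" by simp
      also have "\<dots> \<le> ennreal (exp G * K * q ^ n)"
        using EZn[of n] by (intro ennreal_leI) (simp add: mult.assoc)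
      finally show "(\<integral>\<^sup>+\<omega>. ennreal (exp G * Z (real n) \<omega>) \<partial>P x) \<le> ennreal (exp G * K * q ^ n)" .
    qed (auto intro: summableI)
    also have "\<dots> = ennreal (\<Sum>n. exp G * K * q ^ n)"
      using q0 q1 K0 by (intro suminf_ennreal2) (auto intro!: summable_mult summable_geometric)
    also have "\<dots> < \<infinity>" by simp
    finally show ?thesis .
  qed
  have dom: "ennreal (exp_functional X g (real_of_ereal (\<tau> \<omega>)) \<omega>) \<le> h \<omega>"
    if st: "is_stopping_time M F \<tau>" and om: "\<omega> \<in> space M" for \<tau> \<omega>
  proof -
    define t where "t = real_of_ereal (\<tau> \<omega>)"
    define n where "n = nat \<lfloor>t\<rfloor>"
    have "0 \<le> \<tau> \<omega>" using st om unfolding is_stopping_time_def by auto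
    then have t0: "0 \<le> t" unfolding t_def by (rule real_of_ereal_pos)
    have "exp_functional X g t \<omega> \<le> exp G * Z (real n) \<omega>"
      using Ifloor[OF sfm gc G om t0] unfolding Z_def expf_eq n_def by (simp add: exp_add[symmetric] add.commute)
    also have "ennreal (exp G * Z (real n) \<omega>) \<le> h \<omega>"
      unfolding h_def using sum_le_suminf[OF summableI, of "{n}" "\<lambda>n. ennreal (exp G * Z (real n) \<omega>)"] by simp
    finally show ?thesis unfolding t_def by (simp add: ennreal_leI)
  qed
  have fm: "(\<lambda>\<omega>. exp_functional X g (real_of_ereal (\<tau> \<omega>)) \<omega>) \<in> borel_measurable (P x)"
    if st: "is_stopping_time M F \<tau>" for \<tau>
  proof -
    have [measurable]: "\<tau> \<in> borel_measurable M" by (rule tau_meas[OF sfm st])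
    have "(\<lambda>\<omega>. real_of_ereal (\<tau> \<omega>)) \<in> borel_measurable M" by measurable
    from Z_meas[OF sfm gc this] show ?thesis by (simp add: measurable_cong_sets[OF se refl])
  qed
  define H where "H K \<omega> = (if ennreal K < h \<omega> then h \<omega> else 0)" for K :: real and \<omega>
  have Hm[measurable]: "H K \<in> borel_measurable (P x)" for K unfolding H_def by measurable
  have Hle: "H K \<omega> \<le> h \<omega>" for K \<omega> unfolding H_def by simp
  have Hdec: "H K' \<omega> \<le> H K \<omega>" if "K \<le> K'" for K K' \<omega>
  proof -
    have "ennreal K \<le> ennreal K'" using that by (rule ennreal_leI)
    then show ?thesis unfolding H_def by (auto dest: le_less_trans)
  qed
  have bound: "(\<integral>\<^sup>+\<omega>. indicator {\<omega>. K < \<bar>exp_functional X g (real_of_ereal (\<tau> \<omega>)) \<omega>\<bar>} \<omega>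
        * ennreal \<bar>exp_functional X g (real_of_ereal (\<tau> \<omega>)) \<omega>\<bar> \<partial>P x) \<le> (\<integral>\<^sup>+\<omega>. H K \<omega> \<partial>P x)"
    if st: "is_stopping_time M F \<tau>" for \<tau> K
  proof (rule nn_integral_mono)
    fix \<omega> assume "\<omega> \<in> space (P x)"
    then have om: "\<omega> \<in> space M" using sp by simp
    define v where "v = exp_functional X g (real_of_ereal (\<tau> \<omega>)) \<omega>"
    have v0: "0 < v" unfolding v_def exp_functional_def by simp
    have vh: "ennreal v \<le> h \<omega>" unfolding v_def by (rule dom[OF st om])
    show "indicator {\<omega>. K < \<bar>exp_functional X g (real_of_ereal (\<tau> \<omega>)) \<omega>\<bar>} \<omega>
        * ennreal \<bar>exp_functional X g (real_of_ereal (\<tau> \<omega>)) \<omega>\<bar> \<le> H K \<omega>"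
    proof -
      have e1: "indicator {\<omega>. K < \<bar>exp_functional X g (real_of_ereal (\<tau> \<omega>)) \<omega>\<bar>} \<omega>
        * ennreal \<bar>exp_functional X g (real_of_ereal (\<tau> \<omega>)) \<omega>\<bar> = (if K < v then ennreal v else 0)"
        using v0 unfolding v_def by (simp add: indicator_def)
      have "(if K < v then ennreal v else 0) \<le> H K \<omega>"
      proof (cases "K < v")
        case True
        then have "ennreal K < ennreal v" using v0 by (intro ennreal_lessI)
        then have "ennreal K < h \<omega>" using vh by (rule less_le_trans)
        then show ?thesis using True vh unfolding H_def by simp
      qed simp
      then show ?thesis unfolding e1 .
    qed
  qed
  have INF0: "(INF i. \<integral>\<^sup>+\<omega>. H (real i) \<omega> \<partial>P x) = 0"
  proof -
    have "(\<integral>\<^sup>+\<omega>. (INF i. H (real i) \<omega>) \<partial>P x) = (INF i. \<integral>\<^sup>+\<omega>. H (real i) \<omega> \<partial>P x)"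
    proof (rule nn_integral_monotone_convergence_INF_AE')
      show "AE \<omega> in P x. H (real (Suc i)) \<omega> \<le> H (real i) \<omega>" for i
        by (intro AE_I2 Hdec) simp
      show "(\<integral>\<^sup>+\<omega>. H (real 0) \<omega> \<partial>P x) < \<infinity>"
        using nn_integral_mono[of "P x" "H (real 0)" h] Hle hint by (meson le_less_trans)
    qed simp
    moreover have "(\<integral>\<^sup>+\<omega>. (INF i. H (real i) \<omega>) \<partial>P x) = (\<integral>\<^sup>+\<omega>. 0 \<partial>P x)"
    proof (rule nn_integral_cong_AE)
      have "AE \<omega> in P x. h \<omega> \<noteq> \<infinity>" using hm hint by (intro nn_integral_PInf_AE) auto
      then show "AE \<omega> in P x. (INF i. H (real i) \<omega>) = 0"
      proof (rule AE_mp, intro AE_I2 impI)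
        fix \<omega> assume "h \<omega> \<noteq> \<infinity>"
        then obtain n where "h \<omega> < of_nat n" using ennreal_Ex_less_of_nat by (auto simp: top.not_eq_extremum)
        then have "H (real n) \<omega> = 0" unfolding H_def by (auto simp: ennreal_of_nat_eq_real_of_nat)
        then have "(INF i. H (real i) \<omega>) \<le> 0" by (metis INF_lower2 UNIV_I order_refl)
        then show "(INF i. H (real i) \<omega>) = 0" by simp
      qed
    qed
    ultimately show ?thesis by simp
  qed
  have lim: "((\<lambda>K. \<integral>\<^sup>+\<omega>. H K \<omega> \<partial>P x) \<longlongrightarrow> 0) at_top"
  proof (rule order_tendstoI)
    fix a :: ennreal assume "a < 0" then show "\<forall>\<^sub>F K in at_top. a < (\<integral>\<^sup>+\<omega>. H K \<omega> \<partial>P x)" by simp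
  next
    fix a :: ennreal assume a: "0 < a"
    then obtain i where i: "(\<integral>\<^sup>+\<omega>. H (real i) \<omega> \<partial>P x) < a"
      using INF0 by (metis INF_less_iff UNIV_I)
    show "\<forall>\<^sub>F K in at_top. (\<integral>\<^sup>+\<omega>. H K \<omega> \<partial>P x) < a"
      using eventually_ge_at_top[of "real i"]
    proof (rule eventually_mono)
      fix K assume "real i \<le> K"
      then have "(\<integral>\<^sup>+\<omega>. H K \<omega> \<partial>P x) \<le> (\<integral>\<^sup>+\<omega>. H (real i) \<omega> \<partial>P x)"
        by (intro nn_integral_mono Hdec)
      then show "(\<integral>\<^sup>+\<omega>. H K \<omega> \<partial>P x) < a" using i by (rule le_less_trans)
    qed
  qed
  show ?thesis
    unfolding uniformly_integrable_def
  proof (intro conjI ballI)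
    fix \<tau> assume "\<tau> \<in> {\<tau>. is_stopping_time M F \<tau> \<and> (AE \<omega> in P x. \<tau> \<omega> < \<infinity>)}"
    then show "(\<lambda>\<omega>. exp_functional X g (real_of_ereal (\<tau> \<omega>)) \<omega>) \<in> borel_measurable (P x)"
      using fm by blast
  next
    show "((\<lambda>K::real. SUP \<tau>\<in>{\<tau>. is_stopping_time M F \<tau> \<and> (AE \<omega> in P x. \<tau> \<omega> < \<infinity>)}.
        \<integral>\<^sup>+\<omega>. indicator {\<omega>. K < \<bar>exp_functional X g (real_of_ereal (\<tau> \<omega>)) \<omega>\<bar>} \<omega>
          * ennreal \<bar>exp_functional X g (real_of_ereal (\<tau> \<omega>)) \<omega>\<bar> \<partial>P x) \<longlongrightarrow> 0) at_top"
    proof (rule tendsto_sandwich[OF _ _ tendsto_const lim])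
      show "\<forall>\<^sub>F K in at_top. (0::ennreal) \<le> (SUP \<tau>\<in>{\<tau>. is_stopping_time M F \<tau> \<and> (AE \<omega> in P x. \<tau> \<omega> < \<infinity>)}.
        \<integral>\<^sup>+\<omega>. indicator {\<omega>. K < \<bar>exp_functional X g (real_of_ereal (\<tau> \<omega>)) \<omega>\<bar>} \<omega>
          * ennreal \<bar>exp_functional X g (real_of_ereal (\<tau> \<omega>)) \<omega>\<bar> \<partial>P x)"
        by simp
      show "\<forall>\<^sub>F K in at_top. (SUP \<tau>\<in>{\<tau>. is_stopping_time M F \<tau> \<and> (AE \<omega> in P x. \<tau> \<omega> < \<infinity>)}.
        \<integral>\<^sup>+\<omega>. indicator {\<omega>. K < \<bar>exp_functional X g (real_of_ereal (\<tau> \<omega>)) \<omega>\<bar>} \<omega>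
          * ennreal \<bar>exp_functional X g (real_of_ereal (\<tau> \<omega>)) \<omega>\<bar> \<partial>P x) \<le> (\<integral>\<^sup>+\<omega>. H K \<omega> \<partial>P x)"
        by (intro always_eventually allI SUP_least) (use bound in blast)
    qed
  qed
qed

end
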